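(* Let $m\geq 3$ be an odd integer and $\ell=\lceil\log_2 m\rceil$. Suppose there is a positive integer $j$ such that $\mathbf t_j\mathbf t_{j+1}=\mathbf t_{m+j}\mathbf t_{m+j+1}$. Then $\mathfrak K(m)<\left(1+\frac{j+1}{m}\right)2^\ell$.
   Context: The Thue–Morse word is $\mathbf t=\mathbf t_1\mathbf t_2\cdots$ where $\mathbf t_i\in\{0,1\}$ has the parity of the number of $1$'s in the binary expansion of $i-1$. For positive integers $\alpha\le\beta$, $\langle\alpha,\beta\rangle=\mathbf t_\alpha\cdots\mathbf t_\beta$. A $k$-anti-power is a word $w_1\cdots w_k$ with $w_1,\dots,w_k$ pairwise distinct words of equal length. For a positive integer $m$, $\mathfrak K(m)$ is the smallest positive integer $k$ such that the prefix $\langle 1,km\rangle$ of $\mathbf t$ is not a $k$-anti-power. *)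

theory Defs
  imports Complex_Main
begin

fun bitcount :: "nat \<Rightarrow> nat" where
  "bitcount n = (if n = 0 then 0 else n mod 2 + bitcount (n div 2))"

(* Thue--Morse word, 1-indexed: t i = parity of bitcount (i - 1), for i \<ge> 1 *)
definition tm :: "nat \<Rightarrow> nat" where
  "tm i = bitcount (i - 1) mod 2"

definition tmfactor :: "nat \<Rightarrow> nat \<Rightarrow> nat list" where
  "tmfactor a b = map tm [a..<b + 1]"

definition is_anti_power_prefix :: "nat \<Rightarrow> nat \<Rightarrow> bool" where
  "is_anti_power_prefix k m \<longleftrightarrow>
     (\<forall>i \<in> {1..k}. \<forall>i' \<in> {1..k}. i \<noteq> i' \<longrightarrow>
        tmfactor ((i - 1) * m + 1) (i * m) \<noteq> tmfactor ((i' - 1) * m + 1) (i' * m))"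

definition frakK :: "nat \<Rightarrow> nat" where
  "frakK m = (LEAST k. k > 0 \<and> \<not> is_anti_power_prefix k m)"

end

theory Submission
  imports Defs
begin

declare bitcount.simps[simp del]

lemma bc0: "bitcount 0 = 0" by (simp add: bitcount.simps)
lemma bcS: "bitcount n = n mod 2 + bitcount (n div 2)"
  by (cases "n = 0") (simp_all add: bitcount.simps[of n] bc0)

lemma bitcount_split:
  "y < 2^L \<Longrightarrow> bitcount (2^L * x + y) = bitcount x + bitcount y"
proof (induction L arbitrary: x y)
  case 0
  then show ?case by (simp add: bc0)
next
  case (Suc L)
  have lt: "y div 2 < 2^L" using Suc.prems by (simp add: less_mult_imp_div_less mult.commute)
  have "bitcount (2^Suc L * x + y) = (2^Suc L * x + y) mod 2 + bitcount ((2^Suc L * x + y) div 2)"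
    by (rule bcS)
  also have "(2^Suc L * x + y) mod 2 = y mod 2" by (simp add: mult.assoc)
  also have "(2^Suc L * x + y) div 2 = 2^L * x + y div 2" by (simp add: mult.assoc)
  also have "bitcount (2^L * x + y div 2) = bitcount x + bitcount (y div 2)" using Suc.IH lt by blast
  also have "y mod 2 + (bitcount x + bitcount (y div 2)) = bitcount x + bitcount y"
    using bcS[of y] by simp
  finally show ?case .
qed

definition T :: "nat \<Rightarrow> nat" where "T n = bitcount n mod 2"

lemma T_split: "y < 2^L \<Longrightarrow> T (2^L * x + y) = (T x + T y) mod 2"
  unfolding T_def using bitcount_split by (simp add: mod_add_eq)

lemma tm_T: "tm (Suc n) = T n" unfolding tm_def T_def by simp

lemma blocks_equal:
  fixes N :: nat
  assumes N: "N = 2^L" and mN: "m \<le> N"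
    and h1: "T q = T (q + m)" and h2: "T (q+1) = T (q + m + 1)"
    and lo: "N*q \<le> a*m" and hi: "a*m < N*(q+1)" and r: "r < m"
  shows "T (a*m + r) = T (a*m + r + N*m)"
proof -
  define c where "c = a*m + r - N*q"
  have p: "a*m + r = N*q + c" using lo c_def by simp
  have c2: "c < 2*N" using hi r mN p by (simp add: algebra_simps)
  show ?thesis
  proof (cases "c < N")
    case True
    have "T (a*m+r) = (T q + T c) mod 2" using p T_split[of c L q] True N by simp
    moreover have "a*m + r + N*m = N*(q+m) + c" using p by (simp add: algebra_simps)
    moreover have "T (N*(q+m) + c) = (T (q+m) + T c) mod 2" using T_split[of c L "q+m"] True N by simp
    ultimately show ?thesis using h1 by simp
  next
    case False
    define d where "d = c - N"
    have dl: "d < 2^L" using c2 False d_def N by simp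
    have p2: "a*m + r = N*(q+1) + d" using p False d_def by (simp add: algebra_simps)
    have "T (a*m+r) = (T (q+1) + T d) mod 2" using p2 T_split[of d L "q+1"] dl N by simp
    moreover have "a*m + r + N*m = N*(q+m+1) + d" using p2 by (simp add: algebra_simps)
    moreover have "T (N*(q+m+1) + d) = (T (q+m+1) + T d) mod 2" using T_split[of d L "q+m+1"] dl N by simp
    ultimately show ?thesis using h2 by simp
  qed
qed

lemma tmfactor_block: "tmfactor (a*m + 1) ((a+1)*m) = map (\<lambda>r. T (a*m + r)) [0..<m]"
proof -
  have "[a*m+1..<(a+1)*m+1] = map (\<lambda>r. Suc (a*m + r)) [0..<m]"
  proof -
    have e: "(a+1)*m+1 = Suc (a*m) + m" "a*m+1 = Suc (a*m)" by simp_all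
    show ?thesis unfolding e
      by (rule nth_equalityI) (simp_all del: upt_Suc add: nth_upt)
  qed
  then show ?thesis unfolding tmfactor_def by (simp add: tm_T comp_def)
qed

lemma m_le_pow: "(m::nat) \<ge> 1 \<Longrightarrow> m \<le> 2 ^ (nat \<lceil>log 2 (real m)\<rceil>)"
proof -
  assume m: "m \<ge> 1"
  have "real m = 2 powr (log 2 (real m))" using m by simp
  also have "\<dots> \<le> 2 powr (real_of_int \<lceil>log 2 (real m)\<rceil>)" by simp
  also have "\<dots> = 2 powr (real (nat \<lceil>log 2 (real m)\<rceil>))"
    using m by simp
  also have "\<dots> = 2 ^ (nat \<lceil>log 2 (real m)\<rceil>)" by (simp add: powr_realpow)
  finally show ?thesis by (metis of_nat_le_iff of_nat_numeral of_nat_power)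
qed

theorem lemma4:
  fixes m j :: nat
  assumes "m \<ge> 3" and "odd m" and "j > 0"
    and "tm j = tm (m + j)" and "tm (j + 1) = tm (m + j + 1)"
  shows "real (frakK m) < (1 + real (j + 1) / real m) * 2 ^ (nat \<lceil>log 2 (real m)\<rceil>)"
proof -
  define L where "L = nat \<lceil>log 2 (real m)\<rceil>"
  define N :: nat where "N = 2^L"
  have mN: "m \<le> N" using m_le_pow[of m] assms(1) unfolding N_def L_def by simp
  obtain q where jq: "j = Suc q" using assms(3) gr0_implies_Suc by blast
  have h1: "T q = T (q + m)" using assms(4) by (simp add: jq tm_T add.commute)
  have h2: "T (q+1) = T (q + m + 1)" using assms(5) by (simp add: jq tm_T add.commute)
  define a where "a = (N*q + m - 1) div m"
  have m0: "m > 0" using assms(1) by simp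
  have lo: "N*q \<le> a*m"
  proof -
    have "(N*q + m - 1) div m * m + (N*q + m - 1) mod m = N*q + m - 1" by simp
    moreover have "(N*q + m - 1) mod m < m" using m0 by simp
    ultimately show ?thesis unfolding a_def by linarith
  qed
  have am: "a*m \<le> N*q + m - 1" unfolding a_def by (rule div_times_less_eq_dividend)
  have hi: "a*m < N*(q+1)" using am mN m0 by (simp add: algebra_simps)
  define k where "k = a + N + 1"
  have notap: "\<not> is_anti_power_prefix k m"
  proof -
    have "tmfactor (a*m + 1) ((a+1)*m) = tmfactor ((a+N)*m + 1) ((a+N+1)*m)"
      unfolding tmfactor_block
      using blocks_equal[OF N_def mN h1 h2 lo hi]
      by (simp add: algebra_simps)
    moreover have "N > 0" unfolding N_def by simp
    ultimately have F: "tmfactor ((a+1 - 1)*m + 1) ((a+1)*m) = tmfactor ((a+N+1 - 1)*m + 1) ((a+N+1)*m)"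
      and i1: "a+1 \<in> {1..k}" and i2: "a+N+1 \<in> {1..k}" and ne: "a+1 \<noteq> a+N+1"
      unfolding k_def by simp_all
    show ?thesis unfolding is_anti_power_prefix_def using F i1 i2 ne by blast
  qed
  have "frakK m \<le> k" unfolding frakK_def
    by (rule Least_le) (use notap k_def in simp)
  moreover have "m*(a+N+1) < (m+j+1)*N"
  proof -
    have "m*a + m \<le> N*q + 2*m - 1" using am m0 by (simp add: algebra_simps)
    also have "\<dots> < N*q + 2*N" using mN m0 by simp
    finally have "m*a + m < N*(q+2)" by (simp add: algebra_simps)
    then show ?thesis using jq by (simp add: algebra_simps)
  qed
  ultimately have "m * frakK m < (m+j+1) * N"
    unfolding k_def using mult_le_mono2 le_less_trans by blast
  then have "real m * real (frakK m) < real (m+j+1) * real N"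
    by (metis of_nat_less_iff of_nat_mult)
  then have "real (frakK m) < real (m+j+1) * real N / real m"
    using m0 by (simp add: field_simps)
  also have "real (m+j+1) * real N / real m = (1 + real (j + 1) / real m) * real N"
    using m0 by (simp add: field_simps)
  finally show ?thesis unfolding N_def L_def by simp
qed

end
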